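(* Let $M=\langle S,A,P,R,s_\iota,\gamma\rangle$ be an MDP, $s^*_1,s^*_2\in S$, let $\mathcal{M}$ be the bisimulation metric RMDP constructed from $M$ and $s^*_1,s^*_2$, and let $d^*$ be the bisimulation metric of $M$ (see context). Then the optimal robust value function of $\mathcal{M}$ coincides with $d^*$, i.e. $\underline{V}^*_{\mathcal{M}}=d^*$, and in particular $\underline{V}^*_{\mathcal{M}}(s^*_1,s^*_2)=d^*(s^*_1,s^*_2)$.
   Context: An MDP $M=\langle S,A,P,R,s_\iota,\gamma\rangle$ has finite states $S$, finite actions $A$, transition function $P\colon S\times A\to\mathcal{D}(S)$, rewards $R\colon S\times A\to\mathbb{R}$, initial state $s_\iota$, discount $\gamma\in(0,1)$. A pseudometric on $S$ is $d\colon S\times S\to[0,\infty)$ with $d(x,x)=0$, symmetry and the triangle inequality; $\mathfrak{M}_S$ is the set of pseudometrics on $S$, ordered pointwise. For distributions $\mu,\nu$ on $S$, the set of couplings $\Lambda_{\mu,\nu}$ consists of $\vec\lambda\in\mathbb{R}_{\ge0}^{S\times S}$ with $\sum_{t'}\vec\lambda(t,t')=\mu(t)$, $\sum_t\vec\lambda(t,t')=\nu(t')$; the Kantorovich distance w.r.t. $d$ is $\mathfrak{D}_K(d)(\mu,\nu)=\min_{\vec\lambda\in\Lambda_{\mu,\nu}}\sum_{t,t'}\vec\lambda(t,t')d(t,t')$. Define $\mathfrak{F}_K\colon\mathfrak{M}_S\to\mathfrak{M}_S$ by $\mathfrak{F}_K(d)(s_1,s_2)=\max_{a\in A}(1-\gamma)|R(s_1,a)-R(s_2,a)|+\gamma\,\mathfrak{D}_K(d)(P(s_1,a),P(s_2,a))$;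 the bisimulation metric $d^*$ is the least fixed point of $\mathfrak{F}_K$. The bisimulation metric RMDP is $\mathcal{M}=\langle S\times S,A,\mathcal{U},\mathcal{R},\langle s^*_1,s^*_2\rangle,\gamma\rangle$, an $(s,a)$-rectangular RMDP with state space $S\times S$, uncertainty set $\mathcal{U}=\prod_{((s,s'),a)}\mathcal{U}_{((s,s'),a)}$ with $\mathcal{U}_{((s,s'),a)}=\Lambda_{P(s,a),P(s',a)}$ (a coupling is used as the distribution over successor pairs $(t,t')$), and reward $\mathcal{R}(\langle s,s'\rangle,a)=(1-\gamma)|R(s,a)-R(s',a)|$. For such an RMDP, the robust value of a policy $\pi$ from state $q$ is $\underline{V}^\pi(q)=\inf_{\vec u\in\mathcal{U}}\mathbb{E}_{\pi,P_{\vec u}}[\sum_{t\ge0}\gamma^t\mathcal{R}(q_t,a_t)\mid q_0=q]$ and $\underline{V}^*_{\mathcal{M}}(q)=\sup_\pi\underline{V}^\pi(q)$ over all policies. *)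

theory Defs
  imports "HOL-Probability.Probability"
begin

definition is_pseudometric :: "('s \<Rightarrow> 's \<Rightarrow> real) \<Rightarrow> bool" where
  "is_pseudometric d \<longleftrightarrow>
     (\<forall>x y. 0 \<le> d x y) \<and> (\<forall>x. d x x = 0) \<and> (\<forall>x y. d x y = d y x) \<and>
     (\<forall>x y z. d x z \<le> d x y + d y z)"

definition couplings :: "'s pmf \<Rightarrow> 's pmf \<Rightarrow> ('s \<times> 's) pmf set" where
  "couplings \<mu> \<nu> = {c. map_pmf fst c = \<mu> \<and> map_pmf snd c = \<nu>}"

definition kantorovich :: "('s \<Rightarrow> 's \<Rightarrow> real) \<Rightarrow> 's pmf \<Rightarrow> 's pmf \<Rightarrow> real" where
  "kantorovich d \<mu> \<nu> =
     (INF c \<in> couplings \<mu> \<nu>. measure_pmf.expectation c (\<lambda>(t, t'). d t t'))"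

definition FK :: "('s \<Rightarrow> 'a::finite \<Rightarrow> 's pmf) \<Rightarrow> ('s \<Rightarrow> 'a \<Rightarrow> real) \<Rightarrow> real
                  \<Rightarrow> ('s \<Rightarrow> 's \<Rightarrow> real) \<Rightarrow> ('s \<Rightarrow> 's \<Rightarrow> real)" where
  "FK P R \<gamma> d = (\<lambda>s1 s2. MAX a \<in> (UNIV :: 'a set).
       (1 - \<gamma>) * \<bar>R s1 a - R s2 a\<bar> + \<gamma> * kantorovich d (P s1 a) (P s2 a))"

definition bisim_metric :: "('s \<Rightarrow> 'a::finite \<Rightarrow> 's pmf) \<Rightarrow> ('s \<Rightarrow> 'a \<Rightarrow> real) \<Rightarrow> real
                            \<Rightarrow> ('s \<Rightarrow> 's \<Rightarrow> real)" where
  "bisim_metric P R \<gamma> = (THE d. is_pseudometric d \<and> FK P R \<gamma> d = d \<and>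
      (\<forall>d'. is_pseudometric d' \<and> FK P R \<gamma> d' = d' \<longrightarrow> (\<forall>x y. d x y \<le> d' x y)))"

text \<open>A history is the list of past (state, action) pairs together with the current state.
  A choice of the adversary K fixes a transition kernel.\<close>

type_synonym ('q, 'a) hist = "('q \<times> 'a) list \<times> 'q"

fun hist_dist :: "(('q, 'a) hist \<Rightarrow> 'a pmf) \<Rightarrow> ('q \<Rightarrow> 'a \<Rightarrow> 'q pmf) \<Rightarrow> 'q \<Rightarrow> nat
                   \<Rightarrow> ('q, 'a) hist pmf" where
  "hist_dist \<pi> K q 0 = return_pmf ([], q)"
| "hist_dist \<pi> K q (Suc n) = bind_pmf (hist_dist \<pi> K q n) (\<lambda>(h, x).
      bind_pmf (\<pi> (h, x)) (\<lambda>a. map_pmf (\<lambda>y. (h @ [(x, a)], y)) (K x a)))"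

definition disc_value :: "(('q, 'a) hist \<Rightarrow> 'a pmf) \<Rightarrow> ('q \<Rightarrow> 'a \<Rightarrow> 'q pmf)
                          \<Rightarrow> ('q \<Rightarrow> 'a \<Rightarrow> real) \<Rightarrow> real \<Rightarrow> 'q \<Rightarrow> real" where
  "disc_value \<pi> K rew \<gamma> q = (\<Sum>n. \<gamma> ^ n * measure_pmf.expectation (hist_dist \<pi> K q n)
      (\<lambda>(h, x). measure_pmf.expectation (\<pi> (h, x)) (\<lambda>a. rew x a)))"

definition robust_value :: "(('q, 'a) hist \<Rightarrow> 'a pmf) \<Rightarrow> ('q \<Rightarrow> 'a \<Rightarrow> 'q pmf) set
                            \<Rightarrow> ('q \<Rightarrow> 'a \<Rightarrow> real) \<Rightarrow> real \<Rightarrow> 'q \<Rightarrow> real" where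
  "robust_value \<pi> U rew \<gamma> q = (INF K \<in> U. disc_value \<pi> K rew \<gamma> q)"

definition robust_opt_value :: "('q \<Rightarrow> 'a \<Rightarrow> 'q pmf) set \<Rightarrow> ('q \<Rightarrow> 'a \<Rightarrow> real) \<Rightarrow> real
                                \<Rightarrow> 'q \<Rightarrow> real" where
  "robust_opt_value U rew \<gamma> q = (SUP \<pi> \<in> UNIV. robust_value \<pi> U rew \<gamma> q)"

definition bisim_unc :: "('s \<Rightarrow> 'a \<Rightarrow> 's pmf) \<Rightarrow> (('s \<times> 's) \<Rightarrow> 'a \<Rightarrow> ('s \<times> 's) pmf) set" where
  "bisim_unc P = {K. \<forall>s s' a. K (s, s') a \<in> couplings (P s a) (P s' a)}"

definition bisim_reward :: "('s \<Rightarrow> 'a \<Rightarrow> real) \<Rightarrow> real \<Rightarrow> ('s \<times> 's) \<Rightarrow> 'a \<Rightarrow> real" where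
  "bisim_reward R \<gamma> q a = (1 - \<gamma>) * \<bar>R (fst q) a - R (snd q) a\<bar>"

end

theory Submission
  imports Defs
begin


lemma exp_sum:
  fixes f :: "'b \<Rightarrow> real"
  assumes "finite (set_pmf p)"
  shows "measure_pmf.expectation p f = (\<Sum>a\<in>set_pmf p. f a * pmf p a)"
  by (rule integral_measure_pmf_real) (use assms in auto)

lemma exp_mono:
  fixes f g :: "'b \<Rightarrow> real"
  assumes "finite (set_pmf p)" "\<And>x. x \<in> set_pmf p \<Longrightarrow> f x \<le> g x"
  shows "measure_pmf.expectation p f \<le> measure_pmf.expectation p g"
  unfolding exp_sum[OF assms(1)]
  by (intro sum_mono mult_right_mono) (auto simp: assms)

lemma exp_add:
  fixes f g :: "'b \<Rightarrow> real"
  assumes "finite (set_pmf p)"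
  shows "measure_pmf.expectation p (\<lambda>x. f x + g x) = measure_pmf.expectation p f + measure_pmf.expectation p g"
  unfolding exp_sum[OF assms(1)] by (simp add: sum.distrib algebra_simps)

lemma exp_cmult:
  fixes f :: "'b \<Rightarrow> real"
  shows "measure_pmf.expectation p (\<lambda>x. c * f x) = c * measure_pmf.expectation p f"
  by simp

lemma exp_const:
  shows "measure_pmf.expectation p (\<lambda>x. c) = (c::real)"
  by simp

lemma exp_nonneg:
  fixes f :: "'b \<Rightarrow> real"
  assumes "\<And>x. x \<in> set_pmf p \<Longrightarrow> 0 \<le> f x"
  shows "0 \<le> measure_pmf.expectation p f"
  by (rule integral_nonneg_AE) (use assms in \<open>auto simp: AE_measure_pmf_iff\<close>)

lemma exp_cong:
  fixes f g :: "'b \<Rightarrow> real"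
  assumes "\<And>x. x \<in> set_pmf p \<Longrightarrow> f x = g x"
  shows "measure_pmf.expectation p f = measure_pmf.expectation p g"
  by (rule integral_cong_AE) (use assms in \<open>auto simp: AE_measure_pmf_iff\<close>)

lemma exp_bind:
  fixes h :: "'c \<Rightarrow> real"
  assumes "finite (set_pmf p)" "\<And>x. x \<in> set_pmf p \<Longrightarrow> finite (set_pmf (f x))"
  shows "measure_pmf.expectation (bind_pmf p f) h = measure_pmf.expectation p (\<lambda>x. measure_pmf.expectation (f x) h)"
  apply (subst pmf_expectation_bind[of "set_pmf p"])
  using assms apply auto[3]
  apply (subst exp_sum[OF assms(1)])
  by (simp add: mult.commute)

lemma couplings_ne: "pair_pmf \<mu> \<nu> \<in> couplings \<mu> \<nu>"
  by (simp add: couplings_def map_fst_pair_pmf map_snd_pair_pmf)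

lemma kant_bdd:
  fixes d :: "'s::finite \<Rightarrow> 's \<Rightarrow> real"
  assumes "\<And>x y. 0 \<le> d x y"
  shows "bdd_below ((\<lambda>c. measure_pmf.expectation c (\<lambda>(t, t'). d t t')) ` couplings \<mu> \<nu>)"
  by (rule bdd_belowI[of _ 0]) (auto intro!: exp_nonneg simp: assms split: prod.splits)

lemma kant_le:
  fixes d :: "'s::finite \<Rightarrow> 's \<Rightarrow> real"
  assumes "\<And>x y. 0 \<le> d x y" "c \<in> couplings \<mu> \<nu>"
  shows "kantorovich d \<mu> \<nu> \<le> measure_pmf.expectation c (\<lambda>(t, t'). d t t')"
  unfolding kantorovich_def by (rule cINF_lower[OF kant_bdd[of d, OF assms(1)] assms(2)])

lemma kant_nonneg:
  fixes d :: "'s::finite \<Rightarrow> 's \<Rightarrow> real"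
  assumes "\<And>x y. 0 \<le> d x y"
  shows "0 \<le> kantorovich d \<mu> \<nu>"
  unfolding kantorovich_def using couplings_ne
  by (intro cINF_greatest) (auto intro!: exp_nonneg simp: assms split: prod.splits)

lemma kant_approx:
  fixes d :: "'s::finite \<Rightarrow> 's \<Rightarrow> real"
  assumes "\<And>x y. 0 \<le> d x y" "0 < e"
  shows "\<exists>c\<in>couplings \<mu> \<nu>. measure_pmf.expectation c (\<lambda>(t, t'). d t t') < kantorovich d \<mu> \<nu> + e"
proof -
  have "kantorovich d \<mu> \<nu> < kantorovich d \<mu> \<nu> + e" using assms by simp
  then show ?thesis unfolding kantorovich_def
    using cINF_less_iff[OF _ kant_bdd[of d, OF assms(1)]] couplings_ne by blast
qed

lemma kant_mono:
  fixes d d' :: "'s::finite \<Rightarrow> 's \<Rightarrow> real"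
  assumes "\<And>x y. 0 \<le> d x y" "\<And>x y. 0 \<le> d' x y" "\<And>x y. d x y \<le> d' x y + e"
  shows "kantorovich d \<mu> \<nu> \<le> kantorovich d' \<mu> \<nu> + e"
proof -
  have "kantorovich d \<mu> \<nu> - e \<le> kantorovich d' \<mu> \<nu>"
    unfolding kantorovich_def[of d']
  proof (rule cINF_greatest)
    show "couplings \<mu> \<nu> \<noteq> {}" using couplings_ne by blast
  next
    fix c assume c: "c \<in> couplings \<mu> \<nu>"
    have "kantorovich d \<mu> \<nu> \<le> measure_pmf.expectation c (\<lambda>(t, t'). d t t')"
      by (rule kant_le[OF assms(1) c])
    also have "\<dots> \<le> measure_pmf.expectation c (\<lambda>p. (\<lambda>(t, t'). d' t t') p + e)"
      by (rule exp_mono) (auto intro: finite_subset[of _ UNIV] simp: assms split: prod.splits)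
    also have "\<dots> = measure_pmf.expectation c (\<lambda>(t, t'). d' t t') + e"
      by (subst exp_add) (auto intro: finite_subset[of _ UNIV])
    finally show "kantorovich d \<mu> \<nu> - e \<le> measure_pmf.expectation c (\<lambda>(t, t'). d' t t')" by simp
  qed
  then show ?thesis by simp
qed



lemma fin_pmf: "finite (set_pmf (p :: ('x::finite) pmf))"
  by (rule finite_subset[of _ UNIV]) auto

lemma kant_zero:
  fixes d :: "'s::finite \<Rightarrow> 's \<Rightarrow> real"
  assumes "\<And>x y. 0 \<le> d x y" "\<And>x. d x x = 0"
  shows "kantorovich d \<mu> \<mu> = 0"
proof -
  let ?c = "map_pmf (\<lambda>x. (x, x)) \<mu>"
  have c: "?c \<in> couplings \<mu> \<mu>"
    by (simp add: couplings_def pmf.map_comp o_def)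
  have "kantorovich d \<mu> \<mu> \<le> measure_pmf.expectation ?c (\<lambda>(t, t'). d t t')"
    by (rule kant_le[OF assms(1) c])
  also have "\<dots> = 0" by (simp add: assms(2))
  finally show ?thesis using kant_nonneg[of d, OF assms(1)] by (meson antisym)
qed

lemma kant_sym_le:
  fixes d :: "'s::finite \<Rightarrow> 's \<Rightarrow> real"
  assumes "\<And>x y. 0 \<le> d x y" "\<And>x y. d x y = d y x"
  shows "kantorovich d \<mu> \<nu> \<le> kantorovich d \<nu> \<mu>"
  unfolding kantorovich_def[of d \<nu>]
proof (rule cINF_greatest)
  show "couplings \<nu> \<mu> \<noteq> {}" using couplings_ne by blast
next
  fix c assume c: "c \<in> couplings \<nu> \<mu>"
  have c': "map_pmf prod.swap c \<in> couplings \<mu> \<nu>"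
    using c by (simp add: couplings_def pmf.map_comp o_def)
  have "kantorovich d \<mu> \<nu> \<le> measure_pmf.expectation (map_pmf prod.swap c) (\<lambda>(t, t'). d t t')"
    by (rule kant_le[OF assms(1) c'])
  also have "\<dots> = measure_pmf.expectation c (\<lambda>(t, t'). d t t')"
    by (simp add: split_beta assms(2) del: split_paired_all; simp only: case_prod_unfold)
  finally show "kantorovich d \<mu> \<nu> \<le> measure_pmf.expectation c (\<lambda>(t, t'). d t t')" .
qed

lemma kant_sym:
  fixes d :: "'s::finite \<Rightarrow> 's \<Rightarrow> real"
  assumes "\<And>x y. 0 \<le> d x y" "\<And>x y. d x y = d y x"
  shows "kantorovich d \<mu> \<nu> = kantorovich d \<nu> \<mu>"
  using kant_sym_le[of d, OF assms] by (meson antisym)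

lemma glue:
  fixes c1 c2 :: "('s::finite \<times> 's) pmf"
  assumes c1: "c1 \<in> couplings \<mu> \<nu>" and c2: "c2 \<in> couplings \<nu> \<xi>"
  defines "t \<equiv> bind_pmf c1 (\<lambda>(x, y). map_pmf (\<lambda>(y', z). (x, y', z)) (cond_pmf c2 {p. fst p = y}))"
  shows "map_pmf (\<lambda>(x, y, z). (x, y)) t = c1"
    and "map_pmf (\<lambda>(x, y, z). (y, z)) t = c2"
proof -
  have m1: "map_pmf fst c1 = \<mu>" "map_pmf snd c1 = \<nu>" using c1 by (auto simp: couplings_def)
  have m2: "map_pmf fst c2 = \<nu>" "map_pmf snd c2 = \<xi>" using c2 by (auto simp: couplings_def)
  have ne: "set_pmf c2 \<inter> {p. fst p = y} \<noteq> {}" if "y \<in> set_pmf \<nu>" for y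
  proof -
    have "y \<in> fst ` set_pmf c2" using that m2(1) by (metis set_map_pmf)
    then show ?thesis by force
  qed
  have ysupp: "y \<in> set_pmf \<nu>" if "(x, y) \<in> set_pmf c1" for x y
    using that m1(2) by (metis set_map_pmf image_eqI snd_conv)
  have cancel: "bind_pmf \<nu> (\<lambda>y. cond_pmf c2 {p. fst p = y}) = c2"
  proof (rule bind_cond_pmf_cancel)
    fix y assume "y \<in> set_pmf \<nu>" then show "set_pmf c2 \<inter> {p. fst p = y} \<noteq> {}" by (rule ne)
  next
    fix p assume "p \<in> set_pmf c2"
    then have "fst p \<in> set_pmf \<nu>" using m2(1) by (metis set_map_pmf image_eqI)
    then show "set_pmf \<nu> \<inter> {y. fst p = y} \<noteq> {}" by blast
  next
    fix y p assume "y \<in> set_pmf \<nu>" "p \<in> set_pmf c2" "fst p = y"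
    have "measure_pmf.prob \<nu> {x. fst p = x} = measure_pmf.prob (map_pmf fst c2) {x. fst p = x}"
      using m2(1) by simp
    also have "\<dots> = measure_pmf.prob c2 {q. fst q = y}"
      using \<open>fst p = y\<close> by (simp add: vimage_def eq_commute)
    finally show "measure_pmf.prob c2 {q. fst q = y} = measure_pmf.prob \<nu> {x. fst p = x}" by simp
  qed
  show "map_pmf (\<lambda>(x, y, z). (x, y)) t = c1"
    unfolding t_def map_bind_pmf
  proof -
    have "bind_pmf c1 (\<lambda>xy. map_pmf (\<lambda>(x, y, z). (x, y)) ((\<lambda>(x, y). map_pmf (\<lambda>(y', z). (x, y', z)) (cond_pmf c2 {p. fst p = y})) xy))
        = bind_pmf c1 return_pmf"
    proof (rule bind_pmf_cong[OF refl])
      fix xy assume xy: "xy \<in> set_pmf c1"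
      obtain x y where [simp]: "xy = (x, y)" by (cases xy)
      have yv: "y \<in> set_pmf \<nu>" using ysupp xy by simp
      have "map_pmf (\<lambda>(x, y, z). (x, y)) (map_pmf (\<lambda>(y', z). (x, y', z)) (cond_pmf c2 {p. fst p = y}))
            = map_pmf (\<lambda>_. (x, y)) (cond_pmf c2 {p. fst p = y})"
        unfolding pmf.map_comp
        by (rule map_pmf_cong[OF refl]) (use ne[OF yv] in auto)
      also have "\<dots> = return_pmf (x, y)" by (simp add: map_pmf_const)
      finally show "map_pmf (\<lambda>(x, y, z). (x, y)) ((\<lambda>(x, y). map_pmf (\<lambda>(y', z). (x, y', z)) (cond_pmf c2 {p. fst p = y})) xy) = return_pmf xy"
        by simp
    qed
    then show "bind_pmf c1 (\<lambda>xy. map_pmf (\<lambda>(x, y, z). (x, y)) ((\<lambda>(x, y). map_pmf (\<lambda>(y', z). (x, y', z)) (cond_pmf c2 {p. fst p = y})) xy)) = c1"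
      by (simp add: bind_return_pmf')
  qed
  show "map_pmf (\<lambda>(x, y, z). (y, z)) t = c2"
    unfolding t_def map_bind_pmf
  proof -
    have "bind_pmf c1 (\<lambda>xy. map_pmf (\<lambda>(x, y, z). (y, z)) ((\<lambda>(x, y). map_pmf (\<lambda>(y', z). (x, y', z)) (cond_pmf c2 {p. fst p = y})) xy))
        = bind_pmf c1 (\<lambda>xy. cond_pmf c2 {p. fst p = snd xy})"
    proof (rule bind_pmf_cong[OF refl])
      fix xy assume xy: "xy \<in> set_pmf c1"
      obtain x y where [simp]: "xy = (x, y)" by (cases xy)
      have yv: "y \<in> set_pmf \<nu>" using ysupp xy by simp
      have "map_pmf (\<lambda>(x, y, z). (y, z)) (map_pmf (\<lambda>(y', z). (x, y', z)) (cond_pmf c2 {p. fst p = y}))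
            = map_pmf (\<lambda>p. p) (cond_pmf c2 {p. fst p = y})"
        unfolding pmf.map_comp
        by (rule map_pmf_cong[OF refl]) (use ne[OF yv] in auto)
      then show "map_pmf (\<lambda>(x, y, z). (y, z)) ((\<lambda>(x, y). map_pmf (\<lambda>(y', z). (x, y', z)) (cond_pmf c2 {p. fst p = y})) xy) = cond_pmf c2 {p. fst p = snd xy}"
        by (simp add: pmf.map_ident)
    qed
    also have "\<dots> = bind_pmf (map_pmf snd c1) (\<lambda>y. cond_pmf c2 {p. fst p = y})"
      by (simp add: bind_map_pmf)
    also have "\<dots> = c2" using m1(2) cancel by simp
    finally show "bind_pmf c1 (\<lambda>xy. map_pmf (\<lambda>(x, y, z). (y, z)) ((\<lambda>(x, y). map_pmf (\<lambda>(y', z). (x, y', z)) (cond_pmf c2 {p. fst p = y})) xy)) = c2" .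
  qed
qed



lemma kant_tri:
  fixes d :: "'s::finite \<Rightarrow> 's \<Rightarrow> real"
  assumes "is_pseudometric d"
  shows "kantorovich d \<mu> \<xi> \<le> kantorovich d \<mu> \<nu> + kantorovich d \<nu> \<xi>"
proof (rule field_le_epsilon)
  fix e :: real assume e: "0 < e"
  have nn: "\<And>x y. 0 \<le> d x y" and tri: "\<And>x y z. d x z \<le> d x y + d y z"
    using assms by (auto simp: is_pseudometric_def)
  obtain c1 where c1: "c1 \<in> couplings \<mu> \<nu>"
    and e1: "measure_pmf.expectation c1 (\<lambda>(t, t'). d t t') < kantorovich d \<mu> \<nu> + e/2"
    using kant_approx[of d, OF nn, of "e/2"] e by auto
  obtain c2 where c2: "c2 \<in> couplings \<nu> \<xi>"
    and e2: "measure_pmf.expectation c2 (\<lambda>(t, t'). d t t') < kantorovich d \<nu> \<xi> + e/2"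
    using kant_approx[of d, OF nn, of "e/2"] e by auto
  define t where "t = bind_pmf c1 (\<lambda>(x, y). map_pmf (\<lambda>(y', z). (x, y', z)) (cond_pmf c2 {p. fst p = y}))"
  have t12: "map_pmf (\<lambda>(x, y, z). (x, y)) t = c1" and t23: "map_pmf (\<lambda>(x, y, z). (y, z)) t = c2"
    using glue[OF c1 c2] unfolding t_def by auto
  define c where "c = map_pmf (\<lambda>(x, y, z). (x, z)) t"
  have "map_pmf fst c = map_pmf fst (map_pmf (\<lambda>(x, y, z). (x, y)) t)"
    unfolding c_def pmf.map_comp by (rule map_pmf_cong) auto
  also have "\<dots> = \<mu>" using t12 c1 by (simp add: couplings_def)
  finally have cf: "map_pmf fst c = \<mu>" .
  have "map_pmf snd c = map_pmf snd (map_pmf (\<lambda>(x, y, z). (y, z)) t)"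
    unfolding c_def pmf.map_comp by (rule map_pmf_cong) auto
  also have "\<dots> = \<xi>" using t23 c2 by (simp add: couplings_def)
  finally have cs: "map_pmf snd c = \<xi>" .
  have c: "c \<in> couplings \<mu> \<xi>" using cf cs by (simp add: couplings_def)
  have "kantorovich d \<mu> \<xi> \<le> measure_pmf.expectation c (\<lambda>(t, t'). d t t')"
    by (rule kant_le[OF nn c])
  also have "\<dots> = measure_pmf.expectation t (\<lambda>(x, y, z). d x z)"
    unfolding c_def by (simp add: case_prod_unfold)
  also have "\<dots> \<le> measure_pmf.expectation t (\<lambda>p. (\<lambda>(x, y, z). d x y) p + (\<lambda>(x, y, z). d y z) p)"
    by (rule exp_mono[OF fin_pmf]) (auto simp: tri split: prod.splits)
  also have "\<dots> = measure_pmf.expectation t (\<lambda>(x, y, z). d x y) + measure_pmf.expectation t (\<lambda>(x, y, z). d y z)"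
    by (rule exp_add[OF fin_pmf])
  also have "measure_pmf.expectation t (\<lambda>(x, y, z). d x y) = measure_pmf.expectation c1 (\<lambda>(t, t'). d t t')"
    unfolding t12[symmetric] by (simp add: case_prod_unfold)
  also have "measure_pmf.expectation t (\<lambda>(x, y, z). d y z) = measure_pmf.expectation c2 (\<lambda>(t, t'). d t t')"
    unfolding t23[symmetric] by (simp add: case_prod_unfold)
  finally show "kantorovich d \<mu> \<xi> \<le> kantorovich d \<mu> \<nu> + kantorovich d \<nu> \<xi> + e"
    using e1 e2 by linarith
qed



lemma FK_alt: "FK P R \<gamma> d s1 s2 = Max ((\<lambda>a. (1 - \<gamma>) * \<bar>R s1 a - R s2 a\<bar> + \<gamma> * kantorovich d (P s1 a) (P s2 a)) ` UNIV)"
  by (simp add: FK_def)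

lemma FK_mono_eps:
  fixes d d' :: "'s::finite \<Rightarrow> 's \<Rightarrow> real" and P :: "'s \<Rightarrow> 'a::finite \<Rightarrow> 's pmf"
  assumes "0 \<le> \<gamma>" "\<And>x y. 0 \<le> d x y" "\<And>x y. 0 \<le> d' x y" "\<And>x y. d x y \<le> d' x y + e"
  shows "FK P R \<gamma> d x y \<le> FK P R \<gamma> d' x y + \<gamma> * e"
  unfolding FK_alt
proof (subst Max_le_iff, simp, simp, intro ballI)
  fix t assume "t \<in> range (\<lambda>a. (1 - \<gamma>) * \<bar>R x a - R y a\<bar> + \<gamma> * kantorovich d (P x a) (P y a))"
  then obtain a where t: "t = (1 - \<gamma>) * \<bar>R x a - R y a\<bar> + \<gamma> * kantorovich d (P x a) (P y a)" by auto
  have "kantorovich d (P x a) (P y a) \<le> kantorovich d' (P x a) (P y a) + e"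
    by (rule kant_mono) (use assms in auto)
  then have "t \<le> (1 - \<gamma>) * \<bar>R x a - R y a\<bar> + \<gamma> * kantorovich d' (P x a) (P y a) + \<gamma> * e"
    unfolding t using assms(1) by (simp add: mult_left_mono distrib_left[symmetric])
  also have "\<dots> \<le> Max (range (\<lambda>a. (1 - \<gamma>) * \<bar>R x a - R y a\<bar> + \<gamma> * kantorovich d' (P x a) (P y a))) + \<gamma> * e"
    by simp
  finally show "t \<le> Max (range (\<lambda>a. (1 - \<gamma>) * \<bar>R x a - R y a\<bar> + \<gamma> * kantorovich d' (P x a) (P y a))) + \<gamma> * e" .
qed

lemma FK_mono:
  fixes d d' :: "'s::finite \<Rightarrow> 's \<Rightarrow> real" and P :: "'s \<Rightarrow> 'a::finite \<Rightarrow> 's pmf"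
  assumes "0 \<le> \<gamma>" "\<And>x y. 0 \<le> d x y" "\<And>x y. 0 \<le> d' x y" "\<And>x y. d x y \<le> d' x y"
  shows "FK P R \<gamma> d x y \<le> FK P R \<gamma> d' x y"
  using FK_mono_eps[of \<gamma> d d' 0 P R x y] assms by simp

lemma FK_pm:
  fixes d :: "'s::finite \<Rightarrow> 's \<Rightarrow> real" and P :: "'s \<Rightarrow> 'a::finite \<Rightarrow> 's pmf"
  assumes g: "0 \<le> \<gamma>" "\<gamma> \<le> 1" and d: "is_pseudometric d"
  shows "is_pseudometric (FK P R \<gamma> d)"
proof -
  have nn: "\<And>x y. 0 \<le> d x y" and refl: "\<And>x. d x x = 0" and sym: "\<And>x y. d x y = d y x"
    and tri: "\<And>x y z. d x z \<le> d x y + d y z"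
    using d by (auto simp: is_pseudometric_def)
  define T where "T = (\<lambda>x y a. (1 - \<gamma>) * \<bar>R x a - R y a\<bar> + \<gamma> * kantorovich d (P x a) (P y a))"
  have FKT: "FK P R \<gamma> d x y = Max (range (T x y))" for x y unfolding FK_alt T_def ..
  have Tnn: "0 \<le> T x y a" for x y a
    unfolding T_def using g kant_nonneg[of d, OF nn] by (intro add_nonneg_nonneg mult_nonneg_nonneg) auto
  have "T x y a \<le> FK P R \<gamma> d x y" for x y a unfolding FKT by simp
  then have 1: "0 \<le> FK P R \<gamma> d x y" for x y using Tnn order_trans by blast
  have "T x x a = 0" for x a unfolding T_def using kant_zero[of d, OF nn refl] by simp
  then have 2: "FK P R \<gamma> d x x = 0" for x unfolding FKT by simp
  have "T x y = T y x" for x y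
    unfolding T_def using kant_sym[of d, OF nn sym] by (auto simp: abs_minus_commute)
  then have 3: "FK P R \<gamma> d x y = FK P R \<gamma> d y x" for x y unfolding FKT by simp
  have 4: "FK P R \<gamma> d x z \<le> FK P R \<gamma> d x y + FK P R \<gamma> d y z" for x y z
    unfolding FKT[of x z]
  proof (subst Max_le_iff, simp, simp, intro ballI)
    fix t assume "t \<in> range (T x z)"
    then obtain a where t: "t = T x z a" by auto
    have k: "kantorovich d (P x a) (P z a) \<le> kantorovich d (P x a) (P y a) + kantorovich d (P y a) (P z a)"
      by (rule kant_tri[OF d])
    have r: "\<bar>R x a - R z a\<bar> \<le> \<bar>R x a - R y a\<bar> + \<bar>R y a - R z a\<bar>" by simp
    have "T x z a \<le> T x y a + T y z a"
      unfolding T_def using mult_left_mono[OF k g(1)] mult_left_mono[OF r, of "1-\<gamma>"] g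
      by (simp add: algebra_simps)
    also have "\<dots> \<le> FK P R \<gamma> d x y + FK P R \<gamma> d y z"
      unfolding FKT by (intro add_mono) simp_all
    finally show "t \<le> FK P R \<gamma> d x y + FK P R \<gamma> d y z" using t by simp
  qed
  show ?thesis unfolding is_pseudometric_def using 1 2 3 4 by blast
qed



definition fiter :: "('s \<Rightarrow> 'a::finite \<Rightarrow> 's pmf) \<Rightarrow> ('s \<Rightarrow> 'a \<Rightarrow> real) \<Rightarrow> real \<Rightarrow> nat \<Rightarrow> ('s \<Rightarrow> 's \<Rightarrow> real)" where
  "fiter P R \<gamma> n = (FK P R \<gamma> ^^ n) (\<lambda>_ _. 0)"

lemma fiter_Suc: "fiter P R \<gamma> (Suc n) = FK P R \<gamma> (fiter P R \<gamma> n)"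
  by (simp add: fiter_def)

lemma fiter_0: "fiter P R \<gamma> 0 = (\<lambda>_ _. 0)"
  by (simp add: fiter_def)

lemma pm_zero: "is_pseudometric (\<lambda>_ _. 0::real)"
  by (simp add: is_pseudometric_def)

lemma bisim_fixpoint:
  fixes P :: "'s::finite \<Rightarrow> 'a::finite \<Rightarrow> 's pmf"
  assumes g: "0 < \<gamma>" "\<gamma> < 1"
  shows "is_pseudometric (bisim_metric P R \<gamma>) \<and> FK P R \<gamma> (bisim_metric P R \<gamma>) = bisim_metric P R \<gamma>"
proof -
  let ?f = "fiter P R \<gamma>"
  have g0: "0 \<le> \<gamma>" "\<gamma> \<le> 1" using g by auto
  have pm: "is_pseudometric (?f n)" for n
    by (induction n) (auto simp: fiter_0 fiter_Suc pm_zero intro: FK_pm[OF g0])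
  have nn: "0 \<le> ?f n x y" for n x y using pm[of n] by (auto simp: is_pseudometric_def)
  have inc: "?f n x y \<le> ?f (Suc n) x y" for n x y
  proof (induction n arbitrary: x y)
    case 0 then show ?case using nn[of "Suc 0"] by (simp add: fiter_0)
  next
    case (Suc n) show ?case
      unfolding fiter_Suc[of P R \<gamma> "Suc n"] fiter_Suc[of P R \<gamma> n]
      by (rule FK_mono[OF g0(1)]) (use nn[of n] nn[of "Suc n"] Suc.IH in \<open>auto simp: fiter_Suc\<close>)
  qed
  have incs: "incseq (\<lambda>n. ?f n x y)" for x y using inc by (simp add: incseq_SucI)
  define B where "B = Max (range (\<lambda>p. ?f 1 (fst p) (snd p)))"
  have B1: "?f 1 x y \<le> B" for x y unfolding B_def by (rule Max_ge) (auto intro: image_eqI[of _ _ "(x,y)"])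
  have B0: "0 \<le> B" using B1[of undefined undefined] nn[of 1] by (meson order_trans)
  have step: "?f (Suc n) x y \<le> ?f n x y + \<gamma> ^ n * B" for n x y
  proof (induction n arbitrary: x y)
    case 0 then show ?case using B1 by (simp add: fiter_0)
  next
    case (Suc n)
    have "?f (Suc (Suc n)) x y \<le> ?f (Suc n) x y + \<gamma> * (\<gamma> ^ n * B)"
      unfolding fiter_Suc[of P R \<gamma> "Suc n"] fiter_Suc[of P R \<gamma> n]
      by (rule FK_mono_eps[OF g0(1)]) (use nn Suc nn[of "Suc n", unfolded fiter_Suc] in \<open>auto simp: fiter_Suc\<close>)
    then show ?case by simp
  qed
  have gap: "?f (n + m) x y - ?f n x y \<le> B * \<gamma> ^ n * (1 - \<gamma> ^ m) / (1 - \<gamma>)" for n m x y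
  proof (induction m)
    case 0 then show ?case by simp
  next
    case (Suc m)
    have "?f (n + Suc m) x y - ?f n x y \<le> \<gamma> ^ (n + m) * B + B * \<gamma> ^ n * (1 - \<gamma> ^ m) / (1 - \<gamma>)"
      using step[of "n+m" x y] Suc by simp
    also have "\<dots> = B * \<gamma> ^ n * (1 - \<gamma> ^ Suc m) / (1 - \<gamma>)"
      using g by (simp add: field_simps power_add)
    finally show ?case .
  qed
  have gap2: "?f (n + m) x y - ?f n x y \<le> B * \<gamma> ^ n / (1 - \<gamma>)" for n m x y
  proof -
    have "B * \<gamma> ^ n * (1 - \<gamma> ^ m) \<le> B * \<gamma> ^ n"
      using g B0 by (intro mult_left_le) (auto simp: zero_le_power)
    then have "B * \<gamma> ^ n * (1 - \<gamma> ^ m) / (1 - \<gamma>) \<le> B * \<gamma> ^ n / (1 - \<gamma>)"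
      using g by (intro divide_right_mono) auto
    then show ?thesis using gap[of n m x y] by linarith
  qed
  have conv: "\<exists>L. (\<lambda>n. ?f n x y) \<longlonglongrightarrow> L" for x y
  proof -
    have "incseq (\<lambda>n. ?f n x y)" using incs .
    moreover have "\<forall>i. ?f i x y \<le> B / (1 - \<gamma>)" using gap2[of 0 _ x y] by (simp add: fiter_0)
    ultimately show ?thesis by (rule incseq_convergent) blast
  qed
  define L where "L = (\<lambda>x y. lim (\<lambda>n. ?f n x y))"
  have lim: "(\<lambda>n. ?f n x y) \<longlonglongrightarrow> L x y" for x y
    unfolding L_def using conv[of x y] limI by blast
  have below: "?f n x y \<le> L x y" for n x y
    by (rule LIMSEQ_le_const[OF lim]) (use incs[of x y] in \<open>auto simp: incseq_def intro!: exI[of _ n]\<close>)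
  have above: "L x y \<le> ?f n x y + B * \<gamma> ^ n / (1 - \<gamma>)" for n x y
  proof -
    have "(\<lambda>m. ?f (m + n) x y) \<longlonglongrightarrow> L x y" using LIMSEQ_ignore_initial_segment[OF lim] .
    then show ?thesis
      by (rule LIMSEQ_le_const2) (use gap2[of n _ x y] in \<open>auto simp: add.commute intro!: exI[of _ 0] simp: algebra_simps\<close>)
  qed
  have Lnn: "0 \<le> L x y" for x y using below[of 0] by (simp add: fiter_0)
  have pmL: "is_pseudometric L"
  proof -
    have "L x x = 0" for x
    proof -
      have "(\<lambda>n. ?f n x x) = (\<lambda>n. 0)" using pm by (auto simp: is_pseudometric_def)
      then show ?thesis using LIMSEQ_unique[OF lim[of x x]] by auto
    qed
    moreover have "L x y = L y x" for x y
    proof -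
      have "(\<lambda>n. ?f n x y) = (\<lambda>n. ?f n y x)" using pm by (auto simp: is_pseudometric_def)
      then show ?thesis using LIMSEQ_unique[OF lim[of x y]] lim[of y x] by auto
    qed
    moreover have "L x z \<le> L x y + L y z" for x y z
      by (rule LIMSEQ_le[OF lim tendsto_add[OF lim lim]]) (use pm in \<open>auto simp: is_pseudometric_def\<close>)
    ultimately show ?thesis using Lnn unfolding is_pseudometric_def by blast
  qed
  have fixL: "FK P R \<gamma> L = L"
  proof (intro ext antisym)
    fix x y
    have "FK P R \<gamma> L x y \<le> ?f (Suc n) x y + \<gamma> * (B * \<gamma> ^ n / (1 - \<gamma>))" for n
      unfolding fiter_Suc by (rule FK_mono_eps[OF g0(1)]) (use Lnn nn above in auto)
    also have "\<dots>n \<le> L x y + \<gamma> * (B * \<gamma> ^ n / (1 - \<gamma>))" for n using below by simp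
    finally have le: "FK P R \<gamma> L x y \<le> L x y + \<gamma> * (B * \<gamma> ^ n / (1 - \<gamma>))" for n .
    have "(\<lambda>n. L x y + \<gamma> * (B * \<gamma> ^ n / (1 - \<gamma>))) \<longlonglongrightarrow> L x y + \<gamma> * (B * 0 / (1 - \<gamma>))"
      using g by (intro tendsto_intros LIMSEQ_power_zero) auto
    then show "FK P R \<gamma> L x y \<le> L x y"
      using LIMSEQ_le_const[of _ _ "FK P R \<gamma> L x y"] le by auto
  next
    fix x y
    have "?f (Suc n) x y \<le> FK P R \<gamma> L x y" for n
      unfolding fiter_Suc by (rule FK_mono[OF g0(1)]) (use Lnn nn below in auto)
    then show "L x y \<le> FK P R \<gamma> L x y"
      using LIMSEQ_le_const2[OF LIMSEQ_Suc[OF lim[of x y]]] by auto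
  qed
  have least: "L x y \<le> d' x y" if d': "is_pseudometric d'" "FK P R \<gamma> d' = d'" for d' x y
  proof -
    have "?f n x y \<le> d' x y" for n
    proof (induction n arbitrary: x y)
      case 0 then show ?case using d' by (simp add: fiter_0 is_pseudometric_def)
    next
      case (Suc n)
      have "?f (Suc n) x y \<le> FK P R \<gamma> d' x y"
        unfolding fiter_Suc by (rule FK_mono[OF g0(1)]) (use nn d' Suc in \<open>auto simp: is_pseudometric_def\<close>)
      then show ?case using d'(2) by simp
    qed
    then show ?thesis by (intro LIMSEQ_le_const2[OF lim]) auto
  qed
  have "bisim_metric P R \<gamma> = L"
    unfolding bisim_metric_def
  proof (rule the_equality)
    show "is_pseudometric L \<and> FK P R \<gamma> L = L \<and> (\<forall>d'. is_pseudometric d' \<and> FK P R \<gamma> d' = d' \<longrightarrow> (\<forall>x y. L x y \<le> d' x y))"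
      using pmL fixL least by blast
  next
    fix d assume d: "is_pseudometric d \<and> FK P R \<gamma> d = d \<and> (\<forall>d'. is_pseudometric d' \<and> FK P R \<gamma> d' = d' \<longrightarrow> (\<forall>x y. d x y \<le> d' x y))"
    show "d = L"
    proof (intro ext antisym)
      fix x y show "d x y \<le> L x y" using d pmL fixL by blast
      show "L x y \<le> d x y" using d least by blast
    qed
  qed
  then show ?thesis using pmL fixL by simp
qed



lemma hist_fin:
  fixes \<pi> :: "('q::finite, 'a::finite) hist \<Rightarrow> 'a pmf"
  shows "finite (set_pmf (hist_dist \<pi> K q n))"
proof (induction n)
  case 0 then show ?case by simp
next
  case (Suc n) then show ?case
    by (auto simp: set_bind_pmf split: prod.splits intro!: finite_UN_I fin_pmf)
qed

lemma hist_step: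
  fixes \<pi> :: "('q::finite, 'a::finite) hist \<Rightarrow> 'a pmf" and g :: "'q \<Rightarrow> real"
  shows "measure_pmf.expectation (hist_dist \<pi> K q (Suc n)) (\<lambda>(h, x). g x)
       = measure_pmf.expectation (hist_dist \<pi> K q n) (\<lambda>(h, x). measure_pmf.expectation (\<pi> (h, x)) (\<lambda>a. measure_pmf.expectation (K x a) g))"
proof -
  have fin2: "finite (set_pmf ((\<lambda>(h, x). bind_pmf (\<pi> (h, x)) (\<lambda>a. map_pmf (\<lambda>y. (h @ [(x, a)], y)) (K x a))) z))" for z
    by (auto simp: set_bind_pmf split: prod.splits intro!: finite_UN_I fin_pmf)
  show ?thesis
    apply (simp only: hist_dist.simps)
    apply (subst exp_bind[OF hist_fin fin2])
    apply (rule exp_cong)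
    apply (clarsimp split: prod.splits)
    apply (subst exp_bind[OF fin_pmf])
     apply (simp add: fin_pmf)
    apply simp
    done
qed

definition rr :: "(('q, 'a) hist \<Rightarrow> 'a pmf) \<Rightarrow> ('q \<Rightarrow> 'a \<Rightarrow> 'q pmf) \<Rightarrow> ('q \<Rightarrow> 'a \<Rightarrow> real) \<Rightarrow> 'q \<Rightarrow> nat \<Rightarrow> real" where
  "rr \<pi> K rew q n = measure_pmf.expectation (hist_dist \<pi> K q n)
      (\<lambda>(h, x). measure_pmf.expectation (\<pi> (h, x)) (\<lambda>a. rew x a))"

definition ww :: "(('q, 'a) hist \<Rightarrow> 'a pmf) \<Rightarrow> ('q \<Rightarrow> 'a \<Rightarrow> 'q pmf) \<Rightarrow> ('q \<Rightarrow> real) \<Rightarrow> 'q \<Rightarrow> nat \<Rightarrow> real" where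
  "ww \<pi> K W q n = measure_pmf.expectation (hist_dist \<pi> K q n) (\<lambda>(h, x). W x)"

lemma disc_value_rr: "disc_value \<pi> K rew \<gamma> q = (\<Sum>n. \<gamma> ^ n * rr \<pi> K rew q n)"
  by (simp add: disc_value_def rr_def)

lemma ww0: "ww \<pi> K W q 0 = W q"
  by (simp add: ww_def)

lemma rr_ww_step:
  fixes \<pi> :: "('q::finite, 'a::finite) hist \<Rightarrow> 'a pmf" and W :: "'q \<Rightarrow> real"
  shows "rr \<pi> K rew q n + \<gamma> * ww \<pi> K W q (Suc n) =
    measure_pmf.expectation (hist_dist \<pi> K q n) (\<lambda>(h, x). measure_pmf.expectation (\<pi> (h, x))
        (\<lambda>a. rew x a + \<gamma> * measure_pmf.expectation (K x a) W))"
proof -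
  have "rr \<pi> K rew q n + \<gamma> * ww \<pi> K W q (Suc n) =
    measure_pmf.expectation (hist_dist \<pi> K q n) (\<lambda>(h, x). measure_pmf.expectation (\<pi> (h, x)) (\<lambda>a. rew x a))
    + measure_pmf.expectation (hist_dist \<pi> K q n) (\<lambda>z. \<gamma> * (\<lambda>(h, x). measure_pmf.expectation (\<pi> (h, x)) (\<lambda>a. measure_pmf.expectation (K x a) W)) z)"
    unfolding rr_def ww_def hist_step exp_cmult ..
  also have "\<dots> = measure_pmf.expectation (hist_dist \<pi> K q n) (\<lambda>z. (\<lambda>(h, x). measure_pmf.expectation (\<pi> (h, x)) (\<lambda>a. rew x a)) z +  \<gamma> * (\<lambda>(h, x). measure_pmf.expectation (\<pi> (h, x)) (\<lambda>a. measure_pmf.expectation (K x a) W)) z)"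
    by (rule exp_add[OF hist_fin, symmetric])
  also have "\<dots> = measure_pmf.expectation (hist_dist \<pi> K q n) (\<lambda>(h, x). measure_pmf.expectation (\<pi> (h, x))
        (\<lambda>a. rew x a + \<gamma> * measure_pmf.expectation (K x a) W))"
    by (rule exp_cong) (auto simp: exp_add[OF fin_pmf])
  finally show ?thesis .
qed

lemma partial_upper:
  fixes \<pi> :: "('q::finite, 'a::finite) hist \<Rightarrow> 'a pmf" and W :: "'q \<Rightarrow> real"
  assumes "0 \<le> \<gamma>" "\<And>x. 0 \<le> W x" "\<And>x a. rew x a + \<gamma> * measure_pmf.expectation (K x a) W \<le> W x"
  shows "(\<Sum>k<n. \<gamma> ^ k * rr \<pi> K rew q k) \<le> W q"
proof -
  have step: "rr \<pi> K rew q n + \<gamma> * ww \<pi> K W q (Suc n) \<le> ww \<pi> K W q n" for n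
    apply (subst rr_ww_step) unfolding ww_def
    by (rule exp_mono[OF hist_fin]) (auto simp: assms(3) intro!: order_trans[OF exp_mono[OF fin_pmf] exp_const[THEN eq_refl]])
  have A: "(\<Sum>k<n. \<gamma> ^ k * rr \<pi> K rew q k) + \<gamma> ^ n * ww \<pi> K W q n \<le> W q" for n
  proof (induction n)
    case 0 then show ?case by (simp add: ww0)
  next
    case (Suc n)
    have "\<gamma> ^ n * (rr \<pi> K rew q n + \<gamma> * ww \<pi> K W q (Suc n)) \<le> \<gamma> ^ n * ww \<pi> K W q n"
      using step[of n] assms(1) by (simp add: mult_left_mono)
    then show ?case using Suc by (simp add: algebra_simps)
  qed
  moreover have "0 \<le> \<gamma> ^ n * ww \<pi> K W q n"
    unfolding ww_def using assms by (auto intro!: exp_nonneg mult_nonneg_nonneg split: prod.splits)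
  ultimately show ?thesis using A[of n] by linarith
qed

lemma rr_nonneg:
  fixes \<pi> :: "('q::finite, 'a::finite) hist \<Rightarrow> 'a pmf"
  assumes "\<And>x a. 0 \<le> rew x a"
  shows "0 \<le> rr \<pi> K rew q n"
  unfolding rr_def using assms by (auto intro!: exp_nonneg split: prod.splits)

lemma disc_summable:
  fixes \<pi> :: "('q::finite, 'a::finite) hist \<Rightarrow> 'a pmf"
  assumes "0 \<le> \<gamma>" "\<gamma> < 1" "\<And>x a. 0 \<le> rew x a"
  shows "summable (\<lambda>n. \<gamma> ^ n * rr \<pi> K rew q n)"
proof -
  define M where "M = Max (range (\<lambda>p. rew (fst p) (snd p)))"
  have M: "rew x a \<le> M" for x a unfolding M_def by (rule Max_ge) (auto intro: image_eqI[of _ _ "(x,a)"])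
  have M0: "0 \<le> M" using M[of undefined undefined] assms(3) order_trans by blast
  have "(\<Sum>k<n. \<gamma> ^ k * rr \<pi> K rew q k) \<le> (\<lambda>_. M / (1 - \<gamma>)) q" for n
  proof (rule partial_upper[OF assms(1)])
    show "0 \<le> M / (1 - \<gamma>)" for x :: 'q using M0 assms by simp
    show "rew x a + \<gamma> * measure_pmf.expectation (K x a) (\<lambda>_. M / (1 - \<gamma>)) \<le> M / (1 - \<gamma>)" for x a
    proof -
      have "M + \<gamma> * (M / (1 - \<gamma>)) = M / (1 - \<gamma>)" using assms by (simp add: field_simps)
      then show ?thesis using M[of x a] by simp
    qed
  qed
  then show ?thesis
    by (intro summableI_nonneg_bounded[of _ "M / (1 - \<gamma>)"])
       (auto intro!: mult_nonneg_nonneg rr_nonneg assms zero_le_power)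
qed

lemma disc_upper:
  fixes \<pi> :: "('q::finite, 'a::finite) hist \<Rightarrow> 'a pmf" and W :: "'q \<Rightarrow> real"
  assumes "0 \<le> \<gamma>" "\<gamma> < 1" "\<And>x a. 0 \<le> rew x a" "\<And>x. 0 \<le> W x"
    "\<And>x a. rew x a + \<gamma> * measure_pmf.expectation (K x a) W \<le> W x"
  shows "disc_value \<pi> K rew \<gamma> q \<le> W q"
  unfolding disc_value_rr
  by (rule suminf_le_const[OF disc_summable[OF assms(1-3)]]) (rule partial_upper[OF assms(1,4,5)])

lemma disc_lower:
  fixes \<pi> :: "('q::finite, 'a::finite) hist \<Rightarrow> 'a pmf" and W :: "'q \<Rightarrow> real"
  assumes "0 \<le> \<gamma>" "\<gamma> < 1" "\<And>x a. 0 \<le> rew x a"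
    "\<And>h x. W x \<le> measure_pmf.expectation (\<pi> (h, x)) (\<lambda>a. rew x a + \<gamma> * measure_pmf.expectation (K x a) W)"
  shows "W q \<le> disc_value \<pi> K rew \<gamma> q"
proof -
  define M where "M = Max (range W)"
  have M: "W x \<le> M" for x unfolding M_def by simp
  have step: "ww \<pi> K W q n \<le> rr \<pi> K rew q n + \<gamma> * ww \<pi> K W q (Suc n)" for n
    apply (subst rr_ww_step) unfolding ww_def
    by (rule exp_mono[OF hist_fin]) (auto simp: assms(4))
  have part: "W q \<le> (\<Sum>k<n. \<gamma> ^ k * rr \<pi> K rew q k) + \<gamma> ^ n * ww \<pi> K W q n" for n
  proof (induction n)
    case 0 then show ?case by (simp add: ww0)
  next
    case (Suc n)
    have "\<gamma> ^ n * ww \<pi> K W q n \<le> \<gamma> ^ n * (rr \<pi> K rew q n + \<gamma> * ww \<pi> K W q (Suc n))"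
      using step[of n] assms(1) by (simp add: mult_left_mono)
    then show ?case using Suc by (simp add: algebra_simps)
  qed
  have wM: "ww \<pi> K W q n \<le> M" for n
    unfolding ww_def by (rule order_trans[OF exp_mono[OF hist_fin] exp_const[THEN eq_refl]]) (auto simp: M)
  have sm: "summable (\<lambda>n. \<gamma> ^ n * rr \<pi> K rew q n)" by (rule disc_summable[OF assms(1-3)])
  have ps: "(\<Sum>k<n. \<gamma> ^ k * rr \<pi> K rew q k) \<le> disc_value \<pi> K rew \<gamma> q" for n
    unfolding disc_value_rr
    by (rule sum_le_suminf[OF sm]) (auto intro!: mult_nonneg_nonneg rr_nonneg assms zero_le_power)
  have le: "W q \<le> disc_value \<pi> K rew \<gamma> q + \<gamma> ^ n * M" for n
  proof -
    have "\<gamma> ^ n * ww \<pi> K W q n \<le> \<gamma> ^ n * M" using wM assms(1) by (simp add: mult_left_mono)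
    then show ?thesis using part[of n] ps[of n] by linarith
  qed
  have "(\<lambda>n. disc_value \<pi> K rew \<gamma> q + \<gamma> ^ n * M) \<longlonglongrightarrow> disc_value \<pi> K rew \<gamma> q + 0 * M"
    using assms by (intro tendsto_intros LIMSEQ_power_zero) auto
  then show ?thesis using LIMSEQ_le_const[of _ _ "W q"] le by auto
qed



theorem theorem19:
  fixes P :: "'s::finite \<Rightarrow> 'a::finite \<Rightarrow> 's pmf"
    and R :: "'s \<Rightarrow> 'a \<Rightarrow> real"
    and \<gamma> :: real
    and s1 s2 :: 's
  assumes "0 < \<gamma>" and "\<gamma> < 1"
  shows "(\<forall>s s'. robust_opt_value (bisim_unc P) (bisim_reward R \<gamma>) \<gamma> (s, s')
                  = bisim_metric P R \<gamma> s s')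
       \<and> robust_opt_value (bisim_unc P) (bisim_reward R \<gamma>) \<gamma> (s1, s2)
                  = bisim_metric P R \<gamma> s1 s2"
proof -
  note g = assms
  define d where "d = bisim_metric P R \<gamma>"
  have pm: "is_pseudometric d" and fx: "FK P R \<gamma> d = d"
    using bisim_fixpoint[OF g, of P R] unfolding d_def by auto
  have dnn: "\<And>x y. 0 \<le> d x y" using pm by (auto simp: is_pseudometric_def)
  define W where "W = (\<lambda>q::'s \<times> 's. d (fst q) (snd q))"
  define U where "U = bisim_unc P"
  define rew where "rew = bisim_reward R \<gamma>"
  have Wnn: "0 \<le> W q" for q unfolding W_def by (rule dnn)
  have rnn: "0 \<le> rew q a" for q a unfolding rew_def bisim_reward_def using g by simp
  have kW: "kantorovich d \<mu> \<nu> = (INF c \<in> couplings \<mu> \<nu>. measure_pmf.expectation c W)" for \<mu> \<nu>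
    unfolding kantorovich_def W_def by (simp add: case_prod_unfold)
  have expW: "measure_pmf.expectation c (\<lambda>(t, t'). d t t') = measure_pmf.expectation c W" for c
    unfolding W_def by (simp add: case_prod_unfold)
  define T where "T = (\<lambda>q a. rew q a + \<gamma> * kantorovich d (P (fst q) a) (P (snd q) a))"
  have WT: "W q = Max (range (T q))" for q
  proof -
    have "W q = FK P R \<gamma> d (fst q) (snd q)" unfolding W_def fx ..
    then show ?thesis unfolding FK_alt T_def rew_def bisim_reward_def by simp
  qed
  have TW: "T q a \<le> W q" for q a unfolding WT by simp
  have Une: "(\<lambda>q a. pair_pmf (P (fst q) a) (P (snd q) a)) \<in> U"
    unfolding U_def bisim_unc_def using couplings_ne by auto
  have disc_nn: "0 \<le> disc_value \<pi> K rew \<gamma> q" for \<pi> K q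
    unfolding disc_value_rr using g rnn
    by (intro suminf_nonneg disc_summable) (auto intro!: mult_nonneg_nonneg rr_nonneg)
  have upper: "robust_value \<pi> U rew \<gamma> q \<le> W q" for \<pi> q
  proof (rule field_le_epsilon)
    fix e :: real assume e: "0 < e"
    define e0 where "e0 = e * (1 - \<gamma>) / \<gamma>"
    have e0: "0 < e0" unfolding e0_def using e g by simp
    have "\<forall>qa. \<exists>c. c \<in> couplings (P (fst (fst qa)) (snd qa)) (P (snd (fst qa)) (snd qa)) \<and>
            measure_pmf.expectation c W < kantorovich d (P (fst (fst qa)) (snd qa)) (P (snd (fst qa)) (snd qa)) + e0"
    proof
      fix qa :: "('s \<times> 's) \<times> 'a"
      obtain c where "c \<in> couplings (P (fst (fst qa)) (snd qa)) (P (snd (fst qa)) (snd qa))"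
        "measure_pmf.expectation c (\<lambda>(t, t'). d t t') < kantorovich d (P (fst (fst qa)) (snd qa)) (P (snd (fst qa)) (snd qa)) + e0"
        using kant_approx[of d, OF dnn e0] by blast
      then show "\<exists>c. c \<in> couplings (P (fst (fst qa)) (snd qa)) (P (snd (fst qa)) (snd qa)) \<and>
            measure_pmf.expectation c W < kantorovich d (P (fst (fst qa)) (snd qa)) (P (snd (fst qa)) (snd qa)) + e0"
        unfolding expW by blast
    qed
    then obtain f where f: "\<forall>qa. f qa \<in> couplings (P (fst (fst qa)) (snd qa)) (P (snd (fst qa)) (snd qa)) \<and>
            measure_pmf.expectation (f qa) W < kantorovich d (P (fst (fst qa)) (snd qa)) (P (snd (fst qa)) (snd qa)) + e0"
      by (rule choice[THEN exE])
    define K where "K = (\<lambda>q a. f (q, a))"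
    have K: "\<And>q a. K q a \<in> couplings (P (fst q) a) (P (snd q) a)"
      and Ke: "\<And>q a. measure_pmf.expectation (K q a) W < kantorovich d (P (fst q) a) (P (snd q) a) + e0"
      using f unfolding K_def by auto
    have KU: "K \<in> U" unfolding U_def bisim_unc_def using K[of "(_, _)"] by simp
    have "disc_value \<pi> K rew \<gamma> q \<le> (\<lambda>x. W x + e) q"
    proof (rule disc_upper)
      show "0 \<le> \<gamma>" "\<gamma> < 1" using g by auto
      show "0 \<le> rew x a" for x a by (rule rnn)
      show "0 \<le> W x + e" for x using Wnn[of x] e by simp
      show "rew x a + \<gamma> * measure_pmf.expectation (K x a) (\<lambda>x. W x + e) \<le> W x + e" for x a
      proof -
        have "measure_pmf.expectation (K x a) (\<lambda>x. W x + e) = measure_pmf.expectation (K x a) W + e"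
          by (simp add: exp_add[OF fin_pmf])
        moreover have "\<gamma> * measure_pmf.expectation (K x a) W \<le> \<gamma> * kantorovich d (P (fst x) a) (P (snd x) a) + \<gamma> * e0"
          using Ke[of x a] g by (simp add: distrib_left[symmetric])
        moreover have "\<gamma> * e0 + \<gamma> * e = e" unfolding e0_def using g by (simp add: field_simps)
        moreover have "T x a \<le> W x" by (rule TW)
        ultimately show ?thesis unfolding T_def by (simp add: algebra_simps)
      qed
    qed
    moreover have "robust_value \<pi> U rew \<gamma> q \<le> disc_value \<pi> K rew \<gamma> q"
      unfolding robust_value_def
      by (rule cINF_lower[OF _ KU]) (auto intro!: bdd_belowI[of _ 0] disc_nn)
    ultimately show "robust_value \<pi> U rew \<gamma> q \<le> W q + e" by simp
  qed
  have "\<forall>q. \<exists>a. W q = T q a"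
  proof
    fix q
    have "Max (range (T q)) \<in> range (T q)" by (rule Max_in) auto
    then obtain a where "Max (range (T q)) = T q a" by blast
    then show "\<exists>a. W q = T q a" unfolding WT by blast
  qed
  then obtain \<sigma> where \<sigma>: "\<forall>q. W q = T q (\<sigma> q)" by (rule choice[THEN exE])
  define \<pi>s where "\<pi>s = (\<lambda>hx :: ('s \<times> 's, 'a) hist. return_pmf (\<sigma> (snd hx)))"
  have lower: "W q \<le> robust_value \<pi>s U rew \<gamma> q" for q
    unfolding robust_value_def
  proof (rule cINF_greatest)
    show "U \<noteq> {}" using Une by blast
  next
    fix K assume KU: "K \<in> U"
    show "W q \<le> disc_value \<pi>s K rew \<gamma> q"
    proof (rule disc_lower)
      show "0 \<le> \<gamma>" "\<gamma> < 1" using g by auto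
      show "0 \<le> rew x a" for x a by (rule rnn)
      show "W x \<le> measure_pmf.expectation (\<pi>s (h, x)) (\<lambda>a. rew x a + \<gamma> * measure_pmf.expectation (K x a) W)" for h x
      proof -
        have Kc: "K x (\<sigma> x) \<in> couplings (P (fst x) (\<sigma> x)) (P (snd x) (\<sigma> x))"
          using KU unfolding U_def bisim_unc_def by (cases x) simp
        have "kantorovich d (P (fst x) (\<sigma> x)) (P (snd x) (\<sigma> x)) \<le> measure_pmf.expectation (K x (\<sigma> x)) W"
          using kant_le[of d, OF dnn Kc] expW by simp
        then have "T x (\<sigma> x) \<le> rew x (\<sigma> x) + \<gamma> * measure_pmf.expectation (K x (\<sigma> x)) W"
          unfolding T_def using g by (simp add: mult_left_mono)
        then show ?thesis using \<sigma>[rule_format, of x] unfolding \<pi>s_def by simp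
      qed
    qed
  qed
  have main: "robust_opt_value U rew \<gamma> q = W q" for q
    unfolding robust_opt_value_def
  proof (rule antisym)
    show "(SUP \<pi>\<in>UNIV. robust_value \<pi> U rew \<gamma> q) \<le> W q"
      by (rule cSUP_least) (auto intro: upper)
    have "robust_value \<pi>s U rew \<gamma> q \<le> (SUP \<pi>\<in>UNIV. robust_value \<pi> U rew \<gamma> q)"
      by (rule cSUP_upper) (auto intro!: bdd_aboveI[of _ "W q"] upper)
    then show "W q \<le> (SUP \<pi>\<in>UNIV. robust_value \<pi> U rew \<gamma> q)" using lower[of q] by linarith
  qed
  show ?thesis using main unfolding U_def rew_def W_def d_def by simp
qed

end
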